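(* Let $\mathcal{A}$ be a unital algebra generated by two unital subalgebras $\mathcal{A}_1,\mathcal{A}_2$. Let $\mathcal{I}_1$ (resp. $\mathcal{I}_2$) be an ideal of $\mathcal{A}_1$ (resp. $\mathcal{A}_2$) and $\mathcal{I}$ the ideal of $\mathcal{A}$ generated by $\mathcal{I}_1\cup \mathcal{I}_2$. Let $\tau: \mathcal{A}\to \mathbb{C}$ be a unital linear functional with $\mathcal{I}\subset \ker(\tau)$ and $\tau': \mathcal{I}\to \mathbb{C}$ a linear functional such that $(\mathcal{A}_1,\mathcal{I}_1)$ and $(\mathcal{A}_2,\mathcal{I}_2)$ are free of type $B$ in $(\mathcal{A},\tau,\mathcal{I},\tau')$. Then the pair $(\mathcal{I}_1,\mathcal{A}_2)$ is cyclically monotone with respect to $(\tau',\tau)$.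
   Context: Freeness of type $B$ in $(\mathcal{A},\tau,\mathcal{I},\tau')$ for $(\mathcal{A}_1,\mathcal{I}_1)$, $(\mathcal{A}_2,\mathcal{I}_2)$: $\mathcal{A}_1,\mathcal{A}_2$ are free w.r.t. $\tau$, and whenever $a_n\in\mathcal{A}_{i_n},\dots,a_1\in\mathcal{A}_{i_1}$, $v\in\mathcal{I}_h$, $b_1\in\mathcal{A}_{j_1},\dots,b_m\in\mathcal{A}_{j_m}$ with any two consecutive indices in $i_n,\dots,i_1,h,j_1,\dots,j_m$ different and all $a_r,b_s$ centered for $\tau$, $\tau'(a_n\cdots a_1vb_1\cdots b_m)=\tau(a_nb_m)\cdots\tau(a_1b_1)\tau'(v)$ if $n=m$ and $i_r=j_r$ for all $r$, and $=0$ otherwise. The pair $(\mathcal{I}_1,\mathcal{A}_2)$ is cyclically monotone w.r.t. $(\tau',\tau)$ if for all $a_1,\dots,a_n\in\mathcal{I}_1$ and $b_0,\dots,b_n\in\mathcal{A}_2$, $\tau'(b_0a_1b_1\cdots a_nb_n)=\tau'(a_1\cdots a_n)\tau(b_1)\cdots\tau(b_{n-1})\tau(b_0b_n)$. *)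

theory Defs
  imports Complex_Main
begin

text \<open>A unital complex algebra is modelled as a type of class ring_1 together with a
  complex scalar multiplication making it a complex vector space compatible with the product.\<close>

definition complex_algebra :: "(complex \<Rightarrow> 'a::ring_1 \<Rightarrow> 'a) \<Rightarrow> bool" where
  "complex_algebra sc \<longleftrightarrow> Modules.module sc \<and>
     (\<forall>c x y. sc c (x * y) = sc c x * y \<and> sc c (x * y) = x * sc c y)"

definition unital_subalgebra :: "(complex \<Rightarrow> 'a::ring_1 \<Rightarrow> 'a) \<Rightarrow> 'a set \<Rightarrow> bool" where
  "unital_subalgebra sc B \<longleftrightarrow> 1 \<in> B \<and> 0 \<in> B \<and>
     (\<forall>x\<in>B. \<forall>y\<in>B. x + y \<in> B \<and> x * y \<in> B) \<and> (\<forall>c. \<forall>x\<in>B. sc c x \<in> B)"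

definition gen_subalgebra :: "(complex \<Rightarrow> 'a::ring_1 \<Rightarrow> 'a) \<Rightarrow> 'a set \<Rightarrow> 'a set" where
  "gen_subalgebra sc S = \<Inter>{B. S \<subseteq> B \<and> unital_subalgebra sc B}"

definition alg_ideal :: "(complex \<Rightarrow> 'a::ring_1 \<Rightarrow> 'a) \<Rightarrow> 'a set \<Rightarrow> 'a set \<Rightarrow> bool" where
  "alg_ideal sc B J \<longleftrightarrow> J \<subseteq> B \<and> 0 \<in> J \<and>
     (\<forall>x\<in>J. \<forall>y\<in>J. x + y \<in> J) \<and> (\<forall>c. \<forall>x\<in>J. sc c x \<in> J) \<and>
     (\<forall>a\<in>B. \<forall>x\<in>J. a * x \<in> J \<and> x * a \<in> J)"

definition gen_ideal :: "(complex \<Rightarrow> 'a::ring_1 \<Rightarrow> 'a) \<Rightarrow> 'a set \<Rightarrow> 'a set" where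
  "gen_ideal sc S = \<Inter>{J. S \<subseteq> J \<and> alg_ideal sc UNIV J}"

definition lin_functional_on :: "(complex \<Rightarrow> 'a::ring_1 \<Rightarrow> 'a) \<Rightarrow> 'a set \<Rightarrow> ('a \<Rightarrow> complex) \<Rightarrow> bool" where
  "lin_functional_on sc V f \<longleftrightarrow>
     (\<forall>x\<in>V. \<forall>y\<in>V. f (x + y) = f x + f y) \<and> (\<forall>c. \<forall>x\<in>V. f (sc c x) = c * f x)"

definition lprod :: "'a::monoid_mult list \<Rightarrow> 'a" where
  "lprod xs = foldr (*) xs 1"

definition alternating :: "'b list \<Rightarrow> bool" where
  "alternating ix \<longleftrightarrow> (\<forall>k. Suc k < length ix \<longrightarrow> ix ! k \<noteq> ix ! Suc k)"

definition free_pair :: "('a::ring_1 \<Rightarrow> complex) \<Rightarrow> (nat \<Rightarrow> 'a set) \<Rightarrow> bool" where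
  "free_pair \<tau> A \<longleftrightarrow>
     (\<forall>xs ix. length xs = length ix \<and> xs \<noteq> [] \<and> set ix \<subseteq> {1,2} \<and> alternating ix \<and>
        (\<forall>k<length xs. xs ! k \<in> A (ix ! k) \<and> \<tau> (xs ! k) = 0)
        \<longrightarrow> \<tau> (lprod xs) = 0)"

text \<open>The list \<open>as = [a1,...,an]\<close> with indices \<open>ix = [i1,...,in]\<close> and \<open>bs = [b1,...,bm]\<close>
  with indices \<open>jx = [j1,...,jm]\<close>; the product is \<open>an \<cdots> a1 v b1 \<cdots> bm\<close>.\<close>
definition free_type_B ::
  "('a::ring_1 \<Rightarrow> complex) \<Rightarrow> ('a \<Rightarrow> complex) \<Rightarrow> (nat \<Rightarrow> 'a set) \<Rightarrow> (nat \<Rightarrow> 'a set) \<Rightarrow> bool" where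
  "free_type_B \<tau> \<tau>' A I \<longleftrightarrow> free_pair \<tau> A \<and>
     (\<forall>as ix v h bs jx.
        length as = length ix \<and> length bs = length jx \<and>
        set ix \<subseteq> {1,2} \<and> set jx \<subseteq> {1,2} \<and> h \<in> {1,2} \<and>
        alternating (rev ix @ [h] @ jx) \<and>
        (\<forall>r<length as. as ! r \<in> A (ix ! r) \<and> \<tau> (as ! r) = 0) \<and>
        (\<forall>s<length bs. bs ! s \<in> A (jx ! s) \<and> \<tau> (bs ! s) = 0) \<and>
        v \<in> I h
        \<longrightarrow> \<tau>' (lprod (rev as) * v * lprod bs) =
            (if length as = length bs \<and> ix = jx
             then (\<Prod>r<length as. \<tau> (as ! r * bs ! r)) * \<tau>' v
             else 0))"

definition cyclically_monotone ::
  "('a::ring_1 \<Rightarrow> complex) \<Rightarrow> ('a \<Rightarrow> complex) \<Rightarrow> 'a set \<Rightarrow> 'a set \<Rightarrow> bool" where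
  "cyclically_monotone \<tau>' \<tau> I1 A2 \<longleftrightarrow>
     (\<forall>n a b. n \<ge> 1 \<and> (\<forall>k\<in>{1..n}. a k \<in> I1) \<and> (\<forall>k\<in>{0..n}. b k \<in> A2)
        \<longrightarrow> \<tau>' (b 0 * lprod (map (\<lambda>k. a k * b k) [1..<Suc n])) =
            \<tau>' (lprod (map a [1..<Suc n])) * (\<Prod>k\<in>{1..<n}. \<tau> (b k)) * \<tau> (b 0 * b n))"

end

theory Submission
  imports Defs
begin

lemma lprod_Nil[simp]: "lprod [] = 1" by (simp add: lprod_def)
lemma lprod_Cons[simp]: "lprod (x # xs) = x * lprod xs" by (simp add: lprod_def)
lemma lprod_append[simp]: "lprod (xs @ ys) = lprod xs * lprod ys"
  by (induction xs) (simp_all add: mult.assoc)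

lemma alternating_Cons:
  "alternating (x # ys) \<longleftrightarrow> (ys \<noteq> [] \<longrightarrow> x \<noteq> hd ys) \<and> alternating ys"
  by (auto simp: alternating_def hd_conv_nth nth_Cons split: nat.splits)

definition alt2 :: "nat \<Rightarrow> nat" where "alt2 k = (if even k then 2 else 1)"

lemma alternating_alt2: "alternating (map alt2 [0..<m])"
  unfolding alternating_def alt2_def by auto

lemma hd_alt2: "m > 0 \<Longrightarrow> hd (map alt2 [0..<m]) = 2"
  by (simp add: hd_map alt2_def)

locale cmloc =
  fixes sc :: "complex \<Rightarrow> 'a::ring_1 \<Rightarrow> 'a" and A1 A2 I1 I2 G :: "'a set"
    and \<tau> \<tau>' :: "'a \<Rightarrow> complex"
  assumes scl: "\<And>c x y. sc c x * y = sc c (x * y)"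
    and scr: "\<And>c x y. x * sc c y = sc c (x * y)"
    and A2_1: "1 \<in> A2" and A2_diff: "\<And>x y. x \<in> A2 \<Longrightarrow> y \<in> A2 \<Longrightarrow> x - y \<in> A2"
    and A2_sc: "\<And>c x. x \<in> A2 \<Longrightarrow> sc c x \<in> A2"
    and I1A1: "I1 \<subseteq> A1" and I1_mult: "\<And>a b. a \<in> I1 \<Longrightarrow> b \<in> I1 \<Longrightarrow> a * b \<in> I1"
    and I1G: "I1 \<subseteq> G"
    and G_mult: "\<And>x y z. x \<in> G \<Longrightarrow> y * x * z \<in> G"
    and G_add: "\<And>x y. x \<in> G \<Longrightarrow> y \<in> G \<Longrightarrow> x + y \<in> G"
    and G_sc: "\<And>c x. x \<in> G \<Longrightarrow> sc c x \<in> G"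
    and tau_add: "\<And>x y. \<tau> (x + y) = \<tau> x + \<tau> y"
    and tau_sc: "\<And>c x. \<tau> (sc c x) = c * \<tau> x"
    and tau1: "\<tau> 1 = 1"
    and tauG: "\<And>x. x \<in> G \<Longrightarrow> \<tau> x = 0"
    and tau'_add: "\<And>x y. x \<in> G \<Longrightarrow> y \<in> G \<Longrightarrow> \<tau>' (x + y) = \<tau>' x + \<tau>' y"
    and tau'_sc: "\<And>c x. x \<in> G \<Longrightarrow> \<tau>' (sc c x) = c * \<tau>' x"
    and freeB: "free_type_B \<tau> \<tau>' (\<lambda>i. if i = 1 then A1 else A2) (\<lambda>i. if i = 1 then I1 else I2)"
begin

definition ctr :: "'a \<Rightarrow> 'a" where "ctr b = b - sc (\<tau> b) 1"

lemma ctr_eq: "b = ctr b + sc (\<tau> b) 1" by (simp add: ctr_def)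

lemma ctr_A2: "b \<in> A2 \<Longrightarrow> ctr b \<in> A2"
  unfolding ctr_def by (intro A2_diff A2_sc A2_1)

lemma tau_ctr: "\<tau> (ctr b) = 0"
proof -
  have "\<tau> b = \<tau> (ctr b) + \<tau> (sc (\<tau> b) 1)" by (subst ctr_eq, rule tau_add)
  then show ?thesis by (simp add: tau_sc tau1)
qed

lemma split_mid: "x * b * y = x * ctr b * y + sc (\<tau> b) (x * y)"
proof -
  have "x * b * y = x * (ctr b + sc (\<tau> b) 1) * y" by (subst ctr_eq, rule refl)
  also have "\<dots> = x * ctr b * y + x * sc (\<tau> b) 1 * y" by (simp add: algebra_simps)
  also have "x * sc (\<tau> b) 1 * y = sc (\<tau> b) (x * y)" by (simp add: scr scl)
  finally show ?thesis .
qed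

lemma tau'_split: assumes "x \<in> G" shows "\<tau>' (x * b * y) = \<tau>' (x * ctr b * y) + \<tau> b * \<tau>' (x * y)"
proof -
  have g1: "x * ctr b * y \<in> G" using G_mult[OF assms, of 1 "ctr b * y"] by (simp add: mult.assoc)
  have g2: "x * y \<in> G" using G_mult[OF assms, of 1 y] by simp
  show ?thesis by (subst split_mid) (simp add: tau'_add tau'_sc g1 g2 G_sc)
qed

lemma tau'_split_l: assumes "x \<in> G" shows "\<tau>' (b * x) = \<tau>' (ctr b * x) + \<tau> b * \<tau>' x"
  using split_mid[of 1 b x] G_mult[OF assms, of "ctr b" 1] assms
  by (simp add: tau'_add tau'_sc G_sc)

lemma tau'_split_r: assumes "x \<in> G" shows "\<tau>' (x * b) = \<tau>' (x * ctr b) + \<tau> b * \<tau>' x"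
  using split_mid[of x b 1] G_mult[OF assms, of 1 "ctr b"] assms
  by (simp add: tau'_add tau'_sc G_sc)

lemma tau_split: "\<tau> (x * b * y) = \<tau> (x * ctr b * y) + \<tau> b * \<tau> (x * y)"
  by (subst split_mid) (simp add: tau_add tau_sc)

definition altl :: "'a list \<Rightarrow> bool" where
  "altl xs \<longleftrightarrow> odd (length xs) \<and>
     (\<forall>k<length xs. (even k \<longrightarrow> xs ! k \<in> I1) \<and> (odd k \<longrightarrow> xs ! k \<in> A2 \<and> \<tau> (xs ! k) = 0))"

lemma altl_single: "a \<in> I1 \<Longrightarrow> altl [a]"
  by (simp add: altl_def)

lemma altl_snoc:
  assumes "altl xs" "c \<in> A2" "\<tau> c = 0" "a \<in> I1"
  shows "altl (xs @ [c, a])"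
proof -
  have o: "odd (length xs)" using assms(1) by (simp add: altl_def)
  have A: "(even k \<longrightarrow> (xs @ [c, a]) ! k \<in> I1) \<and> (odd k \<longrightarrow> (xs @ [c, a]) ! k \<in> A2 \<and> \<tau> ((xs @ [c, a]) ! k) = 0)"
    if k: "k < length (xs @ [c, a])" for k
  proof -
    consider "k < length xs" | "k = length xs" | "k = Suc (length xs)" using k by force
    then show ?thesis
    proof cases
      case 1 then show ?thesis using assms(1) by (simp add: altl_def nth_append)
    next
      case 2 then show ?thesis using assms o by (simp add: nth_append)
    next
      case 3 then show ?thesis using assms o by (simp add: nth_append)
    qed
  qed
  have "odd (length (xs @ [c, a]))" using o by simp
  then show ?thesis unfolding altl_def using A by blast
qed

lemma altl_mult:
  assumes "altl xs" "a \<in> I1"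
  shows "altl (butlast xs @ [last xs * a]) \<and> length (butlast xs @ [last xs * a]) = length xs
    \<and> lprod (butlast xs @ [last xs * a]) = lprod xs * a"
proof -
  have o: "odd (length xs)" and P: "\<And>k. k < length xs \<Longrightarrow> (even k \<longrightarrow> xs ! k \<in> I1) \<and> (odd k \<longrightarrow> xs ! k \<in> A2 \<and> \<tau> (xs ! k) = 0)"
    using assms(1) by (auto simp: altl_def)
  have ne: "xs \<noteq> []" using o by auto
  have xs: "xs = butlast xs @ [last xs]" using ne by simp
  have L: "last xs \<in> I1" using P[of "length xs - 1"] o ne by (simp add: last_conv_nth)
  have "lprod (butlast xs @ [last xs * a]) = lprod xs * a"
    by (subst (2) xs) (simp add: mult.assoc)
  moreover have "altl (butlast xs @ [last xs * a])"
  proof -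
    have A: "(even k \<longrightarrow> (butlast xs @ [last xs * a]) ! k \<in> I1) \<and> (odd k \<longrightarrow> (butlast xs @ [last xs * a]) ! k \<in> A2 \<and> \<tau> ((butlast xs @ [last xs * a]) ! k) = 0)"
      if k: "k < length (butlast xs @ [last xs * a])" for k
    proof (cases "k < length xs - 1")
      case True
      then show ?thesis using P[of k] by (simp add: nth_append nth_butlast)
    next
      case False
      then have "k = length xs - 1" using k ne by simp
      then show ?thesis using o ne L I1_mult[OF L assms(2)] by (simp add: nth_append)
    qed
    have "length (butlast xs @ [last xs * a]) = length xs" using ne by simp
    with o have "odd (length (butlast xs @ [last xs * a]))" by simp
    then show ?thesis unfolding altl_def using A by blast
  qed
  ultimately show ?thesis using ne by simp
qed

lemma altl_G: "altl xs \<Longrightarrow> lprod xs \<in> G"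
proof -
  assume a: "altl xs"
  then have ne: "xs \<noteq> []" by (auto simp: altl_def)
  then obtain x r where xs: "xs = x # r" by (cases xs) auto
  have "x \<in> I1" using a xs by (auto simp: altl_def)
  then have "x \<in> G" using I1G by auto
  then show ?thesis using G_mult[of x 1 "lprod r"] xs by simp
qed

lemma altl_odd: "altl xs \<Longrightarrow> odd (length xs)" by (simp add: altl_def)


lemma FB:
  fixes ix jx :: "nat list" and h :: nat
  assumes "length as = length ix" "length bs = length jx"
    "set ix \<subseteq> {1,2}" "set jx \<subseteq> {1,2}" "h \<in> {1,2}"
    "alternating (rev ix @ [h] @ jx)"
    "\<forall>r<length as. as ! r \<in> (if ix ! r = 1 then A1 else A2) \<and> \<tau> (as ! r) = 0"
    "\<forall>s<length bs. bs ! s \<in> (if jx ! s = 1 then A1 else A2) \<and> \<tau> (bs ! s) = 0"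
    "v \<in> (if h = 1 then I1 else I2)"
  shows "\<tau>' (lprod (rev as) * v * lprod bs) =
            (if length as = length bs \<and> ix = jx
             then (\<Prod>r<length as. \<tau> (as ! r * bs ! r)) * \<tau>' v
             else 0)"
proof -
  have "\<forall>as (ix::nat list) v (h::nat) bs (jx::nat list).
        length as = length ix \<and> length bs = length jx \<and>
        set ix \<subseteq> {1,2} \<and> set jx \<subseteq> {1,2} \<and> h \<in> {1,2} \<and>
        alternating (rev ix @ [h] @ jx) \<and>
        (\<forall>r<length as. as ! r \<in> (if ix ! r = 1 then A1 else A2) \<and> \<tau> (as ! r) = 0) \<and>
        (\<forall>s<length bs. bs ! s \<in> (if jx ! s = 1 then A1 else A2) \<and> \<tau> (bs ! s) = 0) \<and>
        v \<in> (if h = 1 then I1 else I2)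
        \<longrightarrow> \<tau>' (lprod (rev as) * v * lprod bs) =
            (if length as = length bs \<and> ix = jx
             then (\<Prod>r<length as. \<tau> (as ! r * bs ! r)) * \<tau>' v
             else 0)"
    using freeB unfolding free_type_B_def by blast
  then show ?thesis using assms by blast
qed

lemma core:
  assumes xs: "altl xs" and ds: "length ds \<le> 1" "\<forall>d\<in>set ds. d \<in> A2 \<and> \<tau> d = 0"
    and es: "length es \<le> 1" "\<forall>e\<in>set es. e \<in> A2 \<and> \<tau> e = 0"
  shows "\<tau>' (lprod ds * lprod xs * lprod es) =
    (if length xs = 1 then \<tau> (lprod ds * lprod es) * \<tau>' (lprod xs) else 0)"
proof -
  have o: "odd (length xs)" using xs by (rule altl_odd)
  have ne: "xs \<noteq> []" using o by auto
  have P: "\<And>k. k < length xs \<Longrightarrow> (even k \<longrightarrow> xs ! k \<in> I1) \<and> (odd k \<longrightarrow> xs ! k \<in> A2 \<and> \<tau> (xs ! k) = 0)"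
    using xs by (auto simp: altl_def)
  define bs where "bs = tl xs @ es"
  define ix where "ix = map (\<lambda>_. 2::nat) ds"
  define jx where "jx = map alt2 [0..<length bs]"
  have rds: "rev ds = ds" using ds(1) by (cases ds) auto
  have hv: "hd xs \<in> I1" using P[of 0] ne by (simp add: hd_conv_nth)
  have alt: "alternating (rev ix @ [1] @ jx)"
  proof (cases ds)
    case Nil
    then show ?thesis unfolding ix_def jx_def
      by (auto simp: alternating_Cons alternating_alt2 hd_alt2 alt2_def)
  next
    case (Cons d r)
    then have "r = []" using ds(1) by simp
    then show ?thesis unfolding ix_def jx_def using Cons
      by (auto simp: alternating_Cons alternating_alt2 hd_alt2 alt2_def)
  qed
  have asc: "\<forall>r<length ds. ds ! r \<in> (if ix ! r = 1 then A1 else A2) \<and> \<tau> (ds ! r) = 0"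
    using ds(2) by (auto simp: ix_def)
  have bsc: "\<forall>s<length bs. bs ! s \<in> (if jx ! s = 1 then A1 else A2) \<and> \<tau> (bs ! s) = 0"
  proof (intro allI impI)
    fix s assume s: "s < length bs"
    show "bs ! s \<in> (if jx ! s = 1 then A1 else A2) \<and> \<tau> (bs ! s) = 0"
    proof (cases "s < length xs - 1")
      case True
      then have b: "bs ! s = xs ! Suc s" by (simp add: bs_def nth_append nth_tl)
      have "Suc s < length xs" using True by simp
      then show ?thesis using P[of "Suc s"] I1A1 I1G tauG s
        by (auto simp: b jx_def alt2_def)
    next
      case False
      then have "s = length xs - 1" "es \<noteq> []" using s es(1) ne by (auto simp: bs_def)
      moreover then have "even s" using o ne by simp
      moreover have "es ! 0 \<in> set es" using \<open>es \<noteq> []\<close> by simp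
      ultimately show ?thesis using es(2) s by (auto simp: bs_def jx_def alt2_def nth_append)
    qed
  qed
  have "\<tau>' (lprod (rev ds) * hd xs * lprod bs) =
            (if length ds = length bs \<and> ix = jx
             then (\<Prod>r<length ds. \<tau> (ds ! r * bs ! r)) * \<tau>' (hd xs)
             else 0)"
    by (rule FB) (use alt asc bsc hv in \<open>auto simp: ix_def jx_def alt2_def\<close>)
  moreover have "lprod (rev ds) * hd xs * lprod bs = lprod ds * lprod xs * lprod es"
  proof -
    have "lprod xs = hd xs * lprod (tl xs)" using ne by (cases xs) auto
    then show ?thesis by (simp add: rds bs_def mult.assoc)
  qed
  moreover have "(if length ds = length bs \<and> ix = jx
             then (\<Prod>r<length ds. \<tau> (ds ! r * bs ! r)) * \<tau>' (hd xs)
             else 0) = (if length xs = 1 then \<tau> (lprod ds * lprod es) * \<tau>' (lprod xs) else 0)"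
  proof (cases "length xs = 1")
    case True
    then obtain x where x: "xs = [x]" by (cases xs) auto
    then have bs: "bs = es" by (simp add: bs_def)
    show ?thesis
    proof (cases ds)
      case Nil
      then show ?thesis using es x bs
        by (cases es) (auto simp: tau1 jx_def ix_def)
    next
      case (Cons d r)
      then have "r = []" using ds(1) by simp
      then show ?thesis using es ds x bs Cons
        by (cases es) (auto simp: jx_def ix_def alt2_def)
    qed
  next
    case False
    then have "length xs \<ge> 3" using o ne by presburger
    then have "length bs \<ge> 2" by (simp add: bs_def)
    then show ?thesis using False ds(1) by auto
  qed
  ultimately show ?thesis by simp
qed

lemma stage1:
  assumes xs: "altl xs" and ds: "length ds \<le> 1" "\<forall>d\<in>set ds. d \<in> A2 \<and> \<tau> d = 0"
    and e: "e \<in> A2"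
  shows "\<tau>' (lprod ds * lprod xs * e) =
    (if length xs = 1 then \<tau> (lprod ds * e) * \<tau>' (lprod xs) else 0)"
proof -
  have G: "lprod ds * lprod xs \<in> G" using G_mult[OF altl_G[OF xs], of "lprod ds" 1] by simp
  have c1: "\<tau>' (lprod ds * lprod xs * ctr e) =
    (if length xs = 1 then \<tau> (lprod ds * ctr e) * \<tau>' (lprod xs) else 0)"
    using core[OF xs ds, of "[ctr e]"] ctr_A2[OF e] tau_ctr by simp
  have c0: "\<tau>' (lprod ds * lprod xs) =
    (if length xs = 1 then \<tau> (lprod ds) * \<tau>' (lprod xs) else 0)"
    using core[OF xs ds, of "[]"] by simp
  have t: "\<tau> (lprod ds * e) = \<tau> (lprod ds * ctr e) + \<tau> e * \<tau> (lprod ds)"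
    using tau_split[of "lprod ds" e 1] by simp
  have "\<tau>' (lprod ds * lprod xs * e) = \<tau>' (lprod ds * lprod xs * ctr e) + \<tau> e * \<tau>' (lprod ds * lprod xs)"
    by (rule tau'_split_r[OF G])
  then show ?thesis using c1 c0 t by (simp add: algebra_simps)
qed

lemma Fgen:
  assumes xs: "altl xs" and d: "d \<in> A2" and e: "e \<in> A2"
  shows "\<tau>' (d * lprod xs * e) =
    (if length xs = 1 then \<tau> (d * e) * \<tau>' (lprod xs) else 0)"
proof -
  have G: "lprod xs * e \<in> G" using G_mult[OF altl_G[OF xs], of 1 e] by simp
  have c1: "\<tau>' (ctr d * lprod xs * e) =
    (if length xs = 1 then \<tau> (ctr d * e) * \<tau>' (lprod xs) else 0)"
    using stage1[OF xs _ _ e, of "[ctr d]"] ctr_A2[OF d] tau_ctr by simp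
  have c0: "\<tau>' (lprod xs * e) =
    (if length xs = 1 then \<tau> e * \<tau>' (lprod xs) else 0)"
    using stage1[OF xs _ _ e, of "[]"] by simp
  have t: "\<tau> (d * e) = \<tau> (ctr d * e) + \<tau> d * \<tau> e"
    using tau_split[of 1 d e] by simp
  have "\<tau>' (d * lprod xs * e) = \<tau>' (d * (lprod xs * e))" by (simp add: mult.assoc)
  also have "\<dots> = \<tau>' (ctr d * (lprod xs * e)) + \<tau> d * \<tau>' (lprod xs * e)"
    by (rule tau'_split_l[OF G])
  finally show ?thesis
    by (simp add: c1[simplified mult.assoc] c0 t algebra_simps)
qed

definition tw :: "('a \<times> 'a) list \<Rightarrow> 'a" where "tw T = lprod (map (\<lambda>p. fst p * snd p) T)"
definition ta :: "('a \<times> 'a) list \<Rightarrow> 'a" where "ta T = lprod (map snd T)"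
definition tb :: "('a \<times> 'a) list \<Rightarrow> complex" where "tb T = prod_list (map (\<lambda>p. \<tau> (fst p)) T)"

lemma tail_alt2:
  assumes "altl xs" "length xs \<noteq> 1" "d \<in> A2" "e \<in> A2" "\<forall>p\<in>set T. fst p \<in> A2 \<and> snd p \<in> I1"
  shows "\<tau>' (d * lprod xs * tw T * e) = 0"
  using assms
proof (induction T arbitrary: xs)
  case Nil
  then show ?case using Fgen[of xs d e] by (simp add: tw_def)
next
  case (Cons p T)
  obtain b a where p: "p = (b, a)" by (cases p)
  have b: "b \<in> A2" and a: "a \<in> I1" using Cons.prems(5) p by auto
  have TT: "\<forall>p\<in>set T. fst p \<in> A2 \<and> snd p \<in> I1" using Cons.prems(5) by auto
  have G: "d * lprod xs \<in> G" using G_mult[OF altl_G[OF Cons.prems(1)], of d 1] by simp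
  have "\<tau>' (d * lprod xs * tw (p # T) * e) = \<tau>' ((d * lprod xs) * b * (a * tw T * e))"
    by (simp add: p tw_def mult.assoc)
  also have "\<dots> = \<tau>' ((d * lprod xs) * ctr b * (a * tw T * e)) + \<tau> b * \<tau>' ((d * lprod xs) * (a * tw T * e))"
    by (rule tau'_split[OF G])
  also have "\<tau>' ((d * lprod xs) * ctr b * (a * tw T * e)) = \<tau>' (d * lprod (xs @ [ctr b, a]) * tw T * e)"
    by (simp add: mult.assoc)
  also have "\<dots> = 0"
    using Cons.IH[of "xs @ [ctr b, a]"] altl_snoc[OF Cons.prems(1) ctr_A2[OF b] tau_ctr a] Cons.prems TT
    by simp
  also have "\<tau>' ((d * lprod xs) * (a * tw T * e)) = \<tau>' (d * lprod (butlast xs @ [last xs * a]) * tw T * e)"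
    using altl_mult[OF Cons.prems(1) a] by (simp add: mult.assoc)
  also have "\<dots> = 0"
    using Cons.IH[of "butlast xs @ [last xs * a]"] altl_mult[OF Cons.prems(1) a] Cons.prems TT
    by simp
  finally show ?case by simp
qed

lemma tail_I1:
  assumes "u \<in> I1" "d \<in> A2" "e \<in> A2" "\<forall>p\<in>set T. fst p \<in> A2 \<and> snd p \<in> I1"
  shows "\<tau>' (d * u * tw T * e) = tb T * \<tau>' (d * u * ta T * e)"
  using assms
proof (induction T arbitrary: u)
  case Nil
  then show ?case by (simp add: tw_def ta_def tb_def)
next
  case (Cons p T)
  obtain b a where p: "p = (b, a)" by (cases p)
  have b: "b \<in> A2" and a: "a \<in> I1" using Cons.prems(4) p by auto
  have TT: "\<forall>p\<in>set T. fst p \<in> A2 \<and> snd p \<in> I1" using Cons.prems(4) by auto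
  have uG: "u \<in> G" using Cons.prems(1) I1G by auto
  have G: "d * u \<in> G" using G_mult[OF uG, of d 1] by simp
  have al: "altl [u, ctr b, a]"
    using altl_snoc[OF altl_single[OF Cons.prems(1)] ctr_A2[OF b] tau_ctr a] by simp
  have "\<tau>' (d * u * tw (p # T) * e) = \<tau>' ((d * u) * b * (a * tw T * e))"
    by (simp add: p tw_def mult.assoc)
  also have "\<dots> = \<tau>' ((d * u) * ctr b * (a * tw T * e)) + \<tau> b * \<tau>' ((d * u) * (a * tw T * e))"
    by (rule tau'_split[OF G])
  also have "\<tau>' ((d * u) * ctr b * (a * tw T * e)) = \<tau>' (d * lprod [u, ctr b, a] * tw T * e)"
    by (simp add: mult.assoc)
  also have "\<dots> = 0"
    using tail_alt2[OF al _ Cons.prems(2,3) TT] by simp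
  also have "\<tau>' ((d * u) * (a * tw T * e)) = \<tau>' (d * (u * a) * tw T * e)"
    by (simp add: mult.assoc)
  also have "\<dots> = tb T * \<tau>' (d * (u * a) * ta T * e)"
    using Cons.IH[OF I1_mult[OF Cons.prems(1) a] Cons.prems(2,3) TT] .
  finally show ?case by (simp add: p tb_def ta_def mult.assoc)
qed

lemma ta_I1: "u \<in> I1 \<Longrightarrow> \<forall>p\<in>set T. snd p \<in> I1 \<Longrightarrow> u * ta T \<in> I1"
proof (induction T arbitrary: u)
  case Nil then show ?case by (simp add: ta_def)
next
  case (Cons p T)
  then have "u * snd p \<in> I1" using I1_mult by auto
  then show ?case using Cons.IH[of "u * snd p"] Cons.prems by (simp add: ta_def mult.assoc)
qed

lemma final:
  assumes "u \<in> I1" "d \<in> A2" "e \<in> A2" "\<forall>p\<in>set T. fst p \<in> A2 \<and> snd p \<in> I1"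
  shows "\<tau>' (d * u * tw T * e) = tb T * \<tau>' (u * ta T) * \<tau> (d * e)"
proof -
  have "u * ta T \<in> I1" using ta_I1 assms by auto
  then have "altl [u * ta T]" by (rule altl_single)
  from Fgen[OF this assms(2,3)] show ?thesis
    using tail_I1[OF assms] by (simp add: mult.assoc)
qed

end

lemma word_id:
  fixes a b :: "nat \<Rightarrow> 'b::monoid_mult"
  shows "m \<le> n \<Longrightarrow> a m * lprod (map (\<lambda>k. b k * a (Suc k)) [m..<n]) * b n = lprod (map (\<lambda>k. a k * b k) [m..<Suc n])"
proof (induction "n - m" arbitrary: m)
  case 0
  then show ?case by simp
next
  case (Suc x)
  then have mn: "m < n" by simp
  have "[m..<n] = m # [Suc m..<n]" using mn by (simp add: upt_conv_Cons)
  moreover have "[m..<Suc n] = m # [Suc m..<Suc n]" using mn by (simp add: upt_conv_Cons)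
  moreover have "a (Suc m) * lprod (map (\<lambda>k. b k * a (Suc k)) [Suc m..<n]) * b n = lprod (map (\<lambda>k. a k * b k) [Suc m..<Suc n])"
    using Suc.hyps(1)[of "Suc m"] Suc.hyps(2) mn by simp
  ultimately show ?case by (simp add: mult.assoc)
qed

theorem proposition2p17:
  fixes sc :: "complex \<Rightarrow> 'a::ring_1 \<Rightarrow> 'a"
    and A1 A2 I1 I2 :: "'a set"
    and \<tau> \<tau>' :: "'a \<Rightarrow> complex"
  assumes alg: "complex_algebra sc"
    and sub1: "unital_subalgebra sc A1"
    and sub2: "unital_subalgebra sc A2"
    and gen: "gen_subalgebra sc (A1 \<union> A2) = UNIV"
    and id1: "alg_ideal sc A1 I1"
    and id2: "alg_ideal sc A2 I2"
    and tau_lin: "lin_functional_on sc UNIV \<tau>"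
    and tau_unit: "\<tau> 1 = 1"
    and tau_ker: "\<forall>x\<in>gen_ideal sc (I1 \<union> I2). \<tau> x = 0"
    and tau'_lin: "lin_functional_on sc (gen_ideal sc (I1 \<union> I2)) \<tau>'"
    and freeB: "free_type_B \<tau> \<tau>' (\<lambda>i. if i = 1 then A1 else A2) (\<lambda>i. if i = 1 then I1 else I2)"
  shows "cyclically_monotone \<tau>' \<tau> I1 A2"
proof -
  define G where "G = gen_ideal sc (I1 \<union> I2)"
  have md: "module sc" using alg by (simp add: complex_algebra_def)
  have neg: "sc (-1) y = - y" for y using module.scale_minus_left[OF md, of 1 y] module.scale_one[OF md] by simp
  interpret cmloc sc A1 A2 I1 I2 G \<tau> \<tau>'
  proof
    show "sc c x * y = sc c (x * y)" "x * sc c y = sc c (x * y)" for c x y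
      using alg unfolding complex_algebra_def by metis+
    show "1 \<in> A2" using sub2 by (simp add: unital_subalgebra_def)
    show "sc c x \<in> A2" if "x \<in> A2" for c x using sub2 that by (simp add: unital_subalgebra_def)
    show "x - y \<in> A2" if "x \<in> A2" "y \<in> A2" for x y
    proof -
      have "sc (-1) y \<in> A2" using sub2 that by (simp add: unital_subalgebra_def)
      then have "x + sc (-1) y \<in> A2" using sub2 that by (simp add: unital_subalgebra_def)
      then show ?thesis by (simp add: neg)
    qed
    show "I1 \<subseteq> A1" using id1 by (simp add: alg_ideal_def)
    show "a * b \<in> I1" if "a \<in> I1" "b \<in> I1" for a b using id1 that by (auto simp: alg_ideal_def)
    show "I1 \<subseteq> G" by (auto simp: G_def gen_ideal_def)
    show "y * x * z \<in> G" if "x \<in> G" for x y z using that by (auto simp: G_def gen_ideal_def alg_ideal_def)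
    show "x + y \<in> G" if "x \<in> G" "y \<in> G" for x y using that by (auto simp: G_def gen_ideal_def alg_ideal_def)
    show "sc c x \<in> G" if "x \<in> G" for c x using that by (auto simp: G_def gen_ideal_def alg_ideal_def)
    show "\<tau> (x + y) = \<tau> x + \<tau> y" "\<tau> (sc c x) = c * \<tau> x" for c x y
      using tau_lin by (auto simp: lin_functional_on_def)
    show "\<tau> 1 = 1" by (rule tau_unit)
    show "\<tau> x = 0" if "x \<in> G" for x using tau_ker that by (simp add: G_def)
    show "\<tau>' (x + y) = \<tau>' x + \<tau>' y" if "x \<in> G" "y \<in> G" for x y
      using tau'_lin that by (simp add: G_def lin_functional_on_def)
    show "\<tau>' (sc c x) = c * \<tau>' x" if "x \<in> G" for c x
      using tau'_lin that by (simp add: G_def lin_functional_on_def)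
    show "free_type_B \<tau> \<tau>' (\<lambda>i. if i = 1 then A1 else A2) (\<lambda>i. if i = 1 then I1 else I2)"
      by (rule freeB)
  qed
  show ?thesis
    unfolding cyclically_monotone_def
  proof (intro allI impI, elim conjE)
    fix n :: nat and a b :: "nat \<Rightarrow> 'a"
    assume n: "1 \<le> n" and ha: "\<forall>k\<in>{1..n}. a k \<in> I1" and hb: "\<forall>k\<in>{0..n}. b k \<in> A2"
    define T where "T = map (\<lambda>k. (b k, a (Suc k))) [1..<n]"
    have TT: "\<forall>p\<in>set T. fst p \<in> A2 \<and> snd p \<in> I1" using ha hb by (auto simp: T_def)
    have w: "b 0 * lprod (map (\<lambda>k. a k * b k) [1..<Suc n]) = b 0 * a 1 * tw T * b n"
      using word_id[OF n, of a b] by (simp add: T_def tw_def o_def mult.assoc)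
    have ta: "a 1 * ta T = lprod (map a [1..<Suc n])"
    proof -
      have "[1..<Suc n] = 1 # [Suc 1..<Suc n]" using n by (simp add: upt_conv_Cons)
      moreover have "map (\<lambda>k. a (Suc k)) [1..<n] = map a (map Suc [1..<n])" by simp
      then have "map (\<lambda>k. a (Suc k)) [1..<n] = map a [Suc 1..<Suc n]" by (simp only: map_Suc_upt)
      ultimately show ?thesis by (simp add: ta_def T_def o_def)
    qed
    have tb: "tb T = (\<Prod>k\<in>{1..<n}. \<tau> (b k))"
      using prod.distinct_set_conv_list[of "[1..<n]" "\<lambda>k. \<tau> (b k)"] by (simp add: tb_def T_def o_def)
    have "\<tau>' (b 0 * a 1 * tw T * b n) = tb T * \<tau>' (a 1 * ta T) * \<tau> (b 0 * b n)"
      by (rule final) (use ha hb n TT in auto)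
    then show "\<tau>' (b 0 * lprod (map (\<lambda>k. a k * b k) [1..<Suc n])) =
       \<tau>' (lprod (map a [1..<Suc n])) * (\<Prod>k\<in>{1..<n}. \<tau> (b k)) * \<tau> (b 0 * b n)"
      unfolding w ta[symmetric] tb[symmetric] by (simp add: ac_simps)
  qed
qed

end
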